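(* Let $0<\alpha<1$ and let $\bar M^\alpha(t)=\bar M(D_\alpha(t))$ be the multivariate generalized space fractional counting process. Its Lévy measure $\Pi^\alpha$ (on $\mathbb{N}_0^q\setminus\{\bar0\}$) is given, for $A_1,\dots,A_q\subseteq\mathbb{N}_0$, by $$\Pi^\alpha(A_1\times\cdots\times A_q)=\frac{\alpha\lambda^\alpha}{\Gamma(1-\alpha)}\sum_{\bar n\succ\bar 0}\ \sum_{\substack{\Omega(k_i,n_i)\\ i=1,\dots,q}}\Gamma\Big(\sum_{i=1}^q\sum_{j=1}^{k_i}n_{ij}-\alpha\Big)\prod_{i=1}^q\prod_{j=1}^{k_i}\frac{(\lambda_{ij}/\lambda)^{n_{ij}}}{n_{ij}!}\,\mathbb{I}_{\{n_i\in A_i\}}.$$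
   Context: Fix $q\ge1$, integers $k_1,\dots,k_q\ge1$, $\lambda_{ij}>0$ ($1\le i\le q$, $1\le j\le k_i$), $\lambda=\sum_{i,j}\lambda_{ij}$. The MGCP $\bar M(t)=(M_1(t),\dots,M_q(t))$ is the $\mathbb{N}_0^q$-valued Lévy process with $\bar M(0)=\bar0$ whose components are independent and $\Pr\{\bar M(t)=\bar n\}=\prod_{i=1}^q\sum_{\Omega(k_i,n_i)}\prod_{j=1}^{k_i}\frac{(\lambda_{ij}t)^{n_{ij}}}{n_{ij}!}e^{-\lambda_{ij}t}$ (equivalently, transition probability $\lambda_{ij}h+o(h)$ of a jump of size $j$ in component $i$ only, $1-\lambda h+o(h)$ of no jump). $\{D_\alpha(t)\}$ is an $\alpha$-stable subordinator independent of $\bar M$, i.e. driftless with $\mathbb{E}e^{-sD_\alpha(t)}=e^{-ts^\alpha}$ and Lévy measure $\frac{\alpha}{\Gamma(1-\alpha)}s^{-\alpha-1}\mathrm{d}s$. $\Omega(k_i,n_i)=\{(n_{i1},\dots,n_{ik_i})\in\mathbb{N}_0^{k_i}:\sum_j jn_{ij}=n_i\}$; the inner sum runs over families $(n_{ij})$ with $(n_{i1},\dots,n_{ik_i})\in\Omega(k_i,n_i)$ for each $i$. $\bar n\succ\bar0$ means $\bar n\in\mathbb{N}_0^q$, $\bar n\ne\bar 0$. *)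

theory Defs
  imports "HOL-Probability.Probability"
begin

text \<open>Points of N_0^q are represented as functions nat => nat that vanish outside the
  index set {1..q}.\<close>
definition lattice :: "nat \<Rightarrow> (nat \<Rightarrow> nat) set" where
  "lattice q = {n. \<forall>i. i \<notin> {1..q} \<longrightarrow> n i = 0}"

definition Omega :: "nat \<Rightarrow> nat \<Rightarrow> (nat \<Rightarrow> nat) set" where
  "Omega k m = {v. (\<forall>j. j \<notin> {1..k} \<longrightarrow> v j = 0) \<and> (\<Sum>j=1..k. j * v j) = m}"

definition Omega_fam :: "nat \<Rightarrow> (nat \<Rightarrow> nat) \<Rightarrow> (nat \<Rightarrow> nat) \<Rightarrow> (nat \<Rightarrow> nat \<Rightarrow> nat) set" where
  "Omega_fam q k n = PiE {1..q} (\<lambda>i. Omega (k i) (n i))"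

definition lam_total :: "nat \<Rightarrow> (nat \<Rightarrow> nat) \<Rightarrow> (nat \<Rightarrow> nat \<Rightarrow> real) \<Rightarrow> real" where
  "lam_total q k lam = (\<Sum>i=1..q. \<Sum>j=1..k i. lam i j)"

definition mgcp_pmf :: "nat \<Rightarrow> (nat \<Rightarrow> nat) \<Rightarrow> (nat \<Rightarrow> nat \<Rightarrow> real) \<Rightarrow> real \<Rightarrow> (nat \<Rightarrow> nat) \<Rightarrow> real" where
  "mgcp_pmf q k lam s n =
     (\<Prod>i=1..q. \<Sum>v\<in>Omega (k i) (n i).
        \<Prod>j=1..k i. (lam i j * s) ^ v j / fact (v j) * exp (- lam i j * s))"

text \<open>mu t is the law of D_alpha(t): a probability distribution on [0,infinity) with
  Laplace transform exp(-t r^alpha).\<close>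
definition stable_subordinator_laws :: "real \<Rightarrow> (real \<Rightarrow> real measure) \<Rightarrow> bool" where
  "stable_subordinator_laws \<alpha> \<mu> \<longleftrightarrow>
     (\<forall>t\<ge>0. prob_space (\<mu> t) \<and> sets (\<mu> t) = sets borel \<and>
        (AE x in \<mu> t. 0 \<le> x) \<and>
        (\<forall>r\<ge>0. (\<integral>x. exp (- r * x) \<partial>\<mu> t) = exp (- t * r powr \<alpha>)))"

text \<open>Law of the subordinated process M(D_alpha(t)), with D_alpha independent of M:
  Pr{M(D_alpha(t)) = n} = E[ Pr{M(s) = n} at s = D_alpha(t) ].\<close>
definition subordinated_pmf ::
  "nat \<Rightarrow> (nat \<Rightarrow> nat) \<Rightarrow> (nat \<Rightarrow> nat \<Rightarrow> real) \<Rightarrow> (real \<Rightarrow> real measure) \<Rightarrow> real \<Rightarrow> (nat \<Rightarrow> nat) \<Rightarrow> real" where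
  "subordinated_pmf q k lam \<mu> t n = (\<integral>s. mgcp_pmf q k lam s n \<partial>\<mu> t)"

text \<open>pi is the Levy measure (given by its point masses on N_0^q \ {0}) of an N_0^q-valued
  Levy process with marginal laws p t: Levy-Khintchine formula (Laplace form, no drift,
  as the process is lattice valued):
  E exp(-<s,X(t)>) = exp(-t * sum_{n > 0} (1 - exp(-<s,n>)) pi(n)) for all s in [0,inf)^q.\<close>
definition is_levy_measure ::
  "nat \<Rightarrow> (real \<Rightarrow> (nat \<Rightarrow> nat) \<Rightarrow> real) \<Rightarrow> ((nat \<Rightarrow> nat) \<Rightarrow> real) \<Rightarrow> bool" where
  "is_levy_measure q p \<pi> \<longleftrightarrow>
     (\<forall>n\<in>lattice q - {\<lambda>_. 0}. 0 \<le> \<pi> n) \<and>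
     \<pi> summable_on (lattice q - {\<lambda>_. 0}) \<and>
     (\<forall>t\<ge>0. \<forall>s::nat \<Rightarrow> real. (\<forall>i\<in>{1..q}. 0 \<le> s i) \<longrightarrow>
        (\<Sum>\<^sub>\<infinity>n\<in>lattice q. p t n * exp (- (\<Sum>i=1..q. s i * real (n i)))) =
        exp (- t * (\<Sum>\<^sub>\<infinity>n\<in>lattice q - {\<lambda>_. 0}.
                      (1 - exp (- (\<Sum>i=1..q. s i * real (n i)))) * \<pi> n)))"

definition levy_measure_of :: "nat \<Rightarrow> ((nat \<Rightarrow> nat) \<Rightarrow> real) \<Rightarrow> (nat \<Rightarrow> nat) set \<Rightarrow> real" where
  "levy_measure_of q \<pi> B = (\<Sum>\<^sub>\<infinity>n\<in>B \<inter> (lattice q - {\<lambda>_. 0}). \<pi> n)"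

end

theory Submission
  imports Defs "HOL-Computational_Algebra.Primes"
begin

lemma my_has_sum_diff:
  fixes f g :: "'a \<Rightarrow> real"
  assumes "(f has_sum a) A" "(g has_sum b) A"
  shows "((\<lambda>x. f x - g x) has_sum (a - b)) A"
proof -
  have "((\<lambda>x. - g x) has_sum (- b)) A" by (simp add: has_sum_uminus assms(2))
  from has_sum_add[OF assms(1) this] show ?thesis by simp
qed

lemma my_infsum_diff:
  fixes f g :: "'a \<Rightarrow> real"
  assumes "f summable_on A" "g summable_on A"
  shows "(\<Sum>\<^sub>\<infinity>x\<in>A. f x - g x) = infsum f A - infsum g A"
  by (rule infsumI, rule my_has_sum_diff) (use assms in auto)

lemma geom_bound_zero:
  fixes x r D :: real
  assumes "0 \<le> r" "r < 1" "\<And>N::nat. \<bar>x\<bar> \<le> r ^ N * D"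
  shows "x = 0"
proof -
  have "(\<lambda>N. r ^ N * D) \<longlonglongrightarrow> 0 * D"
    by (intro tendsto_mult LIMSEQ_power_zero tendsto_const) (use assms in auto)
  hence "\<bar>x\<bar> \<le> 0 * D"
    by (intro tendsto_le[OF _ _ tendsto_const]) (use assms(3) in auto)
  thus ?thesis by simp
qed

lemma summable_bounded_mult:
  fixes d :: "'a \<Rightarrow> real"
  assumes "d summable_on S" "\<And>n. n \<in> S \<Longrightarrow> \<bar>c n\<bar> \<le> 1"
  shows "(\<lambda>n. c n * d n) summable_on S"
proof -
  have "(\<lambda>n. norm (d n)) summable_on S" using assms(1) summable_on_iff_abs_summable_on_real by blast
  hence "(\<lambda>n. norm (c n * d n)) summable_on S"
    by (rule Infinite_Sum.abs_summable_on_comparison_test)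
       (use assms(2) in \<open>auto simp: abs_mult intro: mult_left_le_one_le\<close>)
  thus ?thesis using summable_on_iff_abs_summable_on_real by blast
qed

lemma infsum_abs_bound_mult:
  fixes d :: "'a \<Rightarrow> real"
  assumes "d summable_on S" "\<And>n. n \<in> S \<Longrightarrow> \<bar>c n\<bar> \<le> r"
  shows "\<bar>\<Sum>\<^sub>\<infinity>n\<in>S. c n * d n\<bar> \<le> r * (\<Sum>\<^sub>\<infinity>n\<in>S. \<bar>d n\<bar>)"
proof -
  have ad: "(\<lambda>n. \<bar>d n\<bar>) summable_on S"
    using assms(1) summable_on_iff_abs_summable_on_real by auto
  have r0: "r \<ge> 0 \<or> S = {}" using assms(2) by (meson abs_ge_zero equals0I order.trans)
  show ?thesis
  proof (cases "S = {}")
    case True then show ?thesis by simp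
  next
    case False
    hence r0: "r \<ge> 0" using r0 by auto
    have cd: "(\<lambda>n. norm (c n * d n)) summable_on S"
      by (rule Infinite_Sum.abs_summable_on_comparison_test[where g="\<lambda>n. r * d n"])
         (use ad r0 assms(2) in \<open>auto simp: abs_mult intro: summable_on_cmult_right mult_right_mono\<close>)
    have "\<bar>\<Sum>\<^sub>\<infinity>n\<in>S. c n * d n\<bar> \<le> (\<Sum>\<^sub>\<infinity>n\<in>S. norm (c n * d n))"
      using norm_infsum_bound[OF cd] by simp
    also have "\<dots> \<le> (\<Sum>\<^sub>\<infinity>n\<in>S. r * \<bar>d n\<bar>)"
      by (rule infsum_mono) (use cd ad assms(2) in \<open>auto simp: abs_mult intro: summable_on_cmult_right mult_right_mono\<close>)
    also have "\<dots> = r * (\<Sum>\<^sub>\<infinity>n\<in>S. \<bar>d n\<bar>)" by (rule infsum_cmult_right') 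
    finally show ?thesis .
  qed
qed

lemma dirichlet_unique:
  fixes d :: "'a \<Rightarrow> real" and m :: "'a \<Rightarrow> nat"
  assumes summ: "d summable_on S"
    and inj: "inj_on m S" and m2: "\<And>n. n \<in> S \<Longrightarrow> m n \<ge> 2"
    and eq: "\<And>\<sigma>::nat. (\<Sum>\<^sub>\<infinity>n\<in>S. (1 - (1 / real (m n)) ^ \<sigma>) * d n) = 0"
  shows "\<And>n. n \<in> S \<Longrightarrow> d n = 0"
proof -
  define D where "D = (\<Sum>\<^sub>\<infinity>n\<in>S. \<bar>d n\<bar>)"
  have bnd1: "\<bar>(1 / real (m n)) ^ \<sigma>\<bar> \<le> 1" if "n \<in> S" for n \<sigma>
    using m2[OF that] by (auto simp: power_le_one)
  have sm: "(\<lambda>n. (1 / real (m n)) ^ \<sigma> * d n) summable_on S" for \<sigma>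
    by (rule summable_bounded_mult[OF summ bnd1])
  have T: "(\<Sum>\<^sub>\<infinity>n\<in>S. (1 / real (m n)) ^ \<sigma> * d n) = (\<Sum>\<^sub>\<infinity>n\<in>S. d n)" for \<sigma>
  proof -
    have "0 = (\<Sum>\<^sub>\<infinity>n\<in>S. d n - (1 / real (m n)) ^ \<sigma> * d n)"
      using eq[of \<sigma>] by (simp add: algebra_simps)
    also have "\<dots> = (\<Sum>\<^sub>\<infinity>n\<in>S. d n) - (\<Sum>\<^sub>\<infinity>n\<in>S. (1 / real (m n)) ^ \<sigma> * d n)"
      by (rule my_infsum_diff[OF summ sm])
    finally show ?thesis by simp
  qed
  have c0: "(\<Sum>\<^sub>\<infinity>n\<in>S. d n) = 0"
  proof (rule geom_bound_zero[of "1/2" _ D])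
    fix N :: nat
    have "\<bar>(1 / real (m n)) ^ N\<bar> \<le> (1/2) ^ N" if "n \<in> S" for n
      using m2[OF that] by (auto simp: power_mono frac_le)
    from infsum_abs_bound_mult[of d S "\<lambda>n. (1 / real (m n)) ^ N" "(1/2)^N", OF summ this] T[of N]
    show "\<bar>\<Sum>\<^sub>\<infinity>n\<in>S. d n\<bar> \<le> (1/2) ^ N * D" by (simp add: D_def)
  qed auto
  have T0: "(\<Sum>\<^sub>\<infinity>n\<in>S. (1 / real (m n)) ^ \<sigma> * d n) = 0" for \<sigma>
    using T c0 by simp
  have main: "\<forall>n\<in>S. m n = M \<longrightarrow> d n = 0" for M
  proof (induction M rule: less_induct)
    case (less M)
    show ?case
    proof (intro ballI impI)
      fix n0 assume n0: "n0 \<in> S" "m n0 = M"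
      have M2: "M \<ge> 2" using m2[OF n0(1)] n0(2) by simp
      define S1 where "S1 = {n\<in>S. m n > M}"
      show "d n0 = 0"
      proof (rule geom_bound_zero[of "real M / real (M+1)" _ D])
        show "0 \<le> real M / real (M + 1)" "real M / real (M + 1) < 1" by auto
        fix N :: nat
        have n0S1: "n0 \<notin> S1" using n0 by (auto simp: S1_def)
        have "0 = (\<Sum>\<^sub>\<infinity>n\<in>S. (1 / real (m n)) ^ N * d n)" using T0 by simp
        also have "\<dots> = (\<Sum>\<^sub>\<infinity>n\<in>insert n0 S1. (1 / real (m n)) ^ N * d n)"
        proof (rule infsum_cong_neutral)
          fix x assume x: "x \<in> S - insert n0 S1"
          show "(1 / real (m x)) ^ N * d x = 0"
          proof (cases "m x < M")
            case True thus ?thesis using less.IH[of "m x"] x by auto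
          next
            case False
            hence "m x = M" using x by (auto simp: S1_def)
            hence "x = n0" using inj n0 x by (auto dest: inj_onD)
            thus ?thesis using x by simp
          qed
        qed (use n0 in \<open>auto simp: S1_def\<close>)
        also have "\<dots> = (1 / real M) ^ N * d n0 + (\<Sum>\<^sub>\<infinity>n\<in>S1. (1 / real (m n)) ^ N * d n)"
          proof (subst infsum_insert)
          show "(\<lambda>n. (1 / real (m n)) ^ N * d n) summable_on S1"
            by (rule summable_on_subset[OF sm]) (auto simp: S1_def)
        qed (use n0S1 n0(2) in simp_all)
        finally have h: "0 = (1 / real M) ^ N * d n0 + (\<Sum>\<^sub>\<infinity>n\<in>S1. (1 / real (m n)) ^ N * d n)" .
        have e: "d n0 = - ((real M) ^ N * (\<Sum>\<^sub>\<infinity>n\<in>S1. (1 / real (m n)) ^ N * d n))"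
        proof -
          define X where "X = (\<Sum>\<^sub>\<infinity>n\<in>S1. (1 / real (m n)) ^ N * d n)"
          have "(1 / real M) ^ N * d n0 = - X" using h unfolding X_def by linarith
          hence "real M ^ N * ((1 / real M) ^ N * d n0) = real M ^ N * (- X)" by simp
          moreover have "real M ^ N * (1 / real M) ^ N = 1"
            using M2 by (simp add: power_one_over)
          ultimately show ?thesis unfolding X_def by (simp add: mult.assoc[symmetric])
        qed
        have e2: "(real M) ^ N * (\<Sum>\<^sub>\<infinity>n\<in>S1. (1 / real (m n)) ^ N * d n)
             = (\<Sum>\<^sub>\<infinity>n\<in>S1. (real M / real (m n)) ^ N * d n)"
          by (subst infsum_cmult_right'[symmetric]) (simp add: power_divide)
        have summ1: "d summable_on S1" using summ by (rule summable_on_subset) (auto simp: S1_def)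
        have "\<bar>(real M / real (m n)) ^ N\<bar> \<le> (real M / real (M+1)) ^ N" if "n \<in> S1" for n
        proof -
          have mn: "m n > M" using that by (simp add: S1_def)
          have "real M / real (m n) \<le> real M / real (M+1)"
            by (rule divide_left_mono) (use mn in auto)
          hence "(real M / real (m n)) ^ N \<le> (real M / real (M+1)) ^ N"
            by (intro power_mono) auto
          thus ?thesis by simp
        qed
        from infsum_abs_bound_mult[of d S1 "\<lambda>n. (real M / real (m n)) ^ N", OF summ1 this]
        have "\<bar>d n0\<bar> \<le> (real M / real (M + 1)) ^ N * (\<Sum>\<^sub>\<infinity>n\<in>S1. \<bar>d n\<bar>)"
          using e e2 by simp
        also have "(\<Sum>\<^sub>\<infinity>n\<in>S1. \<bar>d n\<bar>) \<le> D" unfolding D_def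
        proof (rule infsum_mono_neutral)
          show "(\<lambda>n. \<bar>d n\<bar>) summable_on S1" using summ1 summable_on_iff_abs_summable_on_real by auto
          show "(\<lambda>n. \<bar>d n\<bar>) summable_on S" using summ summable_on_iff_abs_summable_on_real by auto
        qed (auto simp: S1_def)
        finally show "\<bar>d n0\<bar> \<le> (real M / real (M + 1)) ^ N * D"
          by (simp add: mult_left_mono)
      qed
    qed
  qed
  fix n assume "n \<in> S" thus "d n = 0" using main by auto
qed

definition latI :: "nat set \<Rightarrow> (nat \<Rightarrow> nat) set" where
  "latI I = {n. \<forall>i. i \<notin> I \<longrightarrow> n i = 0}"

lemma lattice_latI: "lattice q = latI {1..q}"
  by (simp add: lattice_def latI_def)

lemma latI_bij:
  "bij_betw (\<lambda>g i. if i \<in> I then g i else 0) (PiE I (\<lambda>_. UNIV)) (latI I)"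
proof (rule bij_betwI[where g="\<lambda>n. restrict n I"])
  show "(\<lambda>g i. if i \<in> I then g i else 0) \<in> PiE I (\<lambda>_. UNIV) \<rightarrow> latI I"
    by (auto simp: latI_def)
  show "(\<lambda>n. restrict n I) \<in> latI I \<rightarrow> PiE I (\<lambda>_. UNIV::nat set)"
    by auto
  fix g :: "nat \<Rightarrow> nat" assume "g \<in> PiE I (\<lambda>_. UNIV::nat set)"
  thus "restrict (\<lambda>i. if i \<in> I then g i else 0) I = g"
    by (auto simp: fun_eq_iff PiE_def extensional_def)
next
  fix n assume "n \<in> latI I"
  thus "(\<lambda>i. if i \<in> I then restrict n I i else 0) = n"
    by (auto simp: fun_eq_iff latI_def)
qed

lemma countable_latI: "finite I \<Longrightarrow> countable (latI I)"
proof -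
  assume "finite I"
  hence "countable (PiE I (\<lambda>_. UNIV :: nat set))" by (intro countable_PiE) auto
  hence "countable ((\<lambda>g i. if i \<in> I then g i else 0) ` PiE I (\<lambda>_. UNIV :: nat set))" by auto
  thus ?thesis using latI_bij[of I] by (simp add: bij_betw_def)
qed

lemma real_summable_old_abs:
  fixes f :: "'a \<Rightarrow> real"
  shows "f summable_on A \<longleftrightarrow> Infinite_Set_Sum.abs_summable_on f A"
  using summable_on_iff_abs_summable_on_real abs_summable_equivalent by blast

lemma latI_prod_has_sum:
  fixes h :: "nat \<Rightarrow> nat \<Rightarrow> real"
  assumes fin: "finite I" and hs: "\<And>i. i \<in> I \<Longrightarrow> (h i has_sum H i) UNIV"
  shows "((\<lambda>n. \<Prod>i\<in>I. h i (n i)) has_sum (\<Prod>i\<in>I. H i)) (latI I)"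
proof -
  let ?P = "PiE I (\<lambda>_. UNIV :: nat set)"
  let ?e = "\<lambda>g i. if i \<in> I then g i else (0::nat)"
  have abs1: "Infinite_Set_Sum.abs_summable_on (h i) UNIV" if "i \<in> I" for i
    using hs[OF that] real_summable_old_abs by (auto simp: summable_on_def)
  have "Infinite_Set_Sum.abs_summable_on (\<lambda>g. \<Prod>i\<in>I. h i (g i)) ?P"
    by (rule abs_summable_on_prod_PiE[OF fin]) (use abs1 in auto)
  hence sP: "(\<lambda>g. \<Prod>i\<in>I. h i (g i)) summable_on ?P" using real_summable_old_abs by blast
  have abs2: "(\<lambda>x. norm (h i x)) summable_on UNIV" if "i \<in> I" for i
    using hs[OF that] summable_on_iff_abs_summable_on_real by (auto simp: summable_on_def)
  have "infsum (\<lambda>g. \<Prod>i\<in>I. h i (g i)) ?P = (\<Prod>i\<in>I. infsum (h i) UNIV)"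
    by (rule infsum_prod_PiE_abs[OF fin]) (use abs2 in auto)
  also have "\<dots> = (\<Prod>i\<in>I. H i)" using hs by (auto intro!: prod.cong infsumI)
  finally have "((\<lambda>g. \<Prod>i\<in>I. h i (g i)) has_sum (\<Prod>i\<in>I. H i)) ?P"
    using sP has_sum_infsum by metis
  hence "((\<lambda>g. \<Prod>i\<in>I. h i (?e g i)) has_sum (\<Prod>i\<in>I. H i)) ?P"
    by (rule has_sum_cong[THEN iffD1, rotated]) (auto intro!: prod.cong)
  thus ?thesis
    using has_sum_reindex_bij_betw[OF latI_bij[of I], where f="\<lambda>n. \<Prod>i\<in>I. h i (n i)"] by simp
qed

lemma exp_has_sum:
  fixes c :: real assumes "c \<ge> 0"
  shows "((\<lambda>x. c ^ x / fact x) has_sum exp c) UNIV"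
proof -
  have "(\<lambda>x. c ^ x /\<^sub>R fact x) sums exp c" by (rule exp_converges)
  hence "(\<lambda>x. c ^ x / fact x) sums exp c" by (simp add: divide_inverse_commute scaleR_conv_of_real)
  thus ?thesis by (rule sums_nonneg_imp_has_sum) (use assms in auto)
qed

lemma Omega_sub: "Omega k m \<subseteq> latI {1..k}"
  by (auto simp: Omega_def latI_def)

lemma Omega_finite: "finite (Omega k m)"
proof -
  let ?e = "\<lambda>g i. if i \<in> {1..k} then g i else (0::nat)"
  have "Omega k m \<subseteq> ?e ` PiE {1..k} (\<lambda>_. {0..m})"
  proof
    fix v assume v: "v \<in> Omega k m"
    have le: "v j \<le> m" if "j \<in> {1..k}" for j
    proof -
      have "v j \<le> j * v j" using that by simp
      also have "j * v j \<le> (\<Sum>j=1..k. j * v j)"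
        by (rule member_le_sum) (use that in auto)
      finally show ?thesis using v by (simp add: Omega_def)
    qed
    have "v = ?e (restrict v {1..k})" using v by (auto simp: Omega_def fun_eq_iff)
    moreover have "restrict v {1..k} \<in> PiE {1..k} (\<lambda>_. {0..m})" using le by auto
    ultimately show "v \<in> ?e ` PiE {1..k} (\<lambda>_. {0..m})" by blast
  qed
  moreover have "finite (?e ` PiE {1..k} (\<lambda>_. {0..m}))" by (intro finite_imageI finite_PiE) auto
  ultimately show ?thesis by (rule finite_subset)
qed

lemma Omega_regroup:
  fixes F :: "(nat \<Rightarrow> nat) \<Rightarrow> real"
  assumes "(F has_sum T) (latI {1..k})"
  shows "((\<lambda>m. \<Sum>v\<in>Omega k m. F v) has_sum T) UNIV"
proof -
  have bij: "bij_betw snd (Sigma UNIV (Omega k)) (latI {1..k})"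
    by (rule bij_betwI[where g="\<lambda>v. (\<Sum>j=1..k. j * v j, v)"])
       (auto simp: Omega_def latI_def)
  have "((\<lambda>x. F (snd x)) has_sum T) (Sigma UNIV (Omega k))"
    using has_sum_reindex_bij_betw[OF bij, of F T] assms by simp
  hence "((\<lambda>(m,v). F v) has_sum T) (Sigma UNIV (Omega k))"
    by (simp add: case_prod_unfold)
  thus ?thesis
    by (rule has_sum_Sigma') (auto intro: has_sum_finite Omega_finite)
qed

lemma gen_fun_1:
  fixes lam :: "nat \<Rightarrow> real" and u s :: real
  assumes lam: "\<And>j. j \<in> {1..k} \<Longrightarrow> lam j \<ge> 0" and u: "u \<ge> 0"
  shows "((\<lambda>m. (\<Sum>v\<in>Omega k m. \<Prod>j=1..k. (lam j * u) ^ v j / fact (v j) * exp (- lam j * u))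
             * exp (- s * real m))
          has_sum (\<Prod>j=1..k. exp (- lam j * u * (1 - exp (- (real j * s)))))) UNIV"
proof -
  define w where "w j x = (lam j * u * exp (- (real j * s))) ^ x / fact x * exp (- lam j * u)" for j x
  define F where "F v = (\<Prod>j=1..k. w j (v j))" for v
  have hw: "(w j has_sum (exp (lam j * u * exp (- (real j * s))) * exp (- lam j * u))) UNIV"
    if "j \<in> {1..k}" for j
    unfolding w_def
    by (rule has_sum_cmult_left, rule exp_has_sum) (use lam[OF that] u in auto)
  have "(F has_sum (\<Prod>j=1..k. exp (lam j * u * exp (- (real j * s))) * exp (- lam j * u))) (latI {1..k})"
    unfolding F_def by (rule latI_prod_has_sum) (use hw in auto)
  hence "((\<lambda>m. \<Sum>v\<in>Omega k m. F v) has_sum (\<Prod>j=1..k. exp (lam j * u * exp (- (real j * s))) * exp (- lam j * u))) UNIV"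
    by (rule Omega_regroup)
  moreover have "(\<Sum>v\<in>Omega k m. F v) =
      (\<Sum>v\<in>Omega k m. \<Prod>j=1..k. (lam j * u) ^ v j / fact (v j) * exp (- lam j * u)) * exp (- s * real m)" for m
  proof -
    have "(\<Sum>v\<in>Omega k m. F v) = (\<Sum>v\<in>Omega k m. (\<Prod>j=1..k. (lam j * u) ^ v j / fact (v j) * exp (- lam j * u)) * exp (- s * real m))"
    proof (rule sum.cong[OF refl])
      fix v assume v: "v \<in> Omega k m"
      have mv: "real m = (\<Sum>j=1..k. real j * real (v j))"
      proof -
        have "real m = real (\<Sum>j=1..k. j * v j)" using v by (simp add: Omega_def)
        thus ?thesis by simp
      qed
      have "- s * real m = (\<Sum>j=1..k. (- s) * (real j * real (v j)))"
        unfolding mv by (rule sum_distrib_left)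
      also have "\<dots> = (\<Sum>j=1..k. - (real j * s) * real (v j))"
        by (rule sum.cong) (auto simp: algebra_simps)
      finally have "exp (- s * real m) = exp (\<Sum>j=1..k. - (real j * s) * real (v j))" by simp
      also have "\<dots> = (\<Prod>j=1..k. exp (- (real j * s)) ^ v j)"
        by (simp add: exp_sum) (intro prod.cong refl, simp add: exp_of_nat2_mult[symmetric])
      finally have "exp (- s * real m) = (\<Prod>j=1..k. exp (- (real j * s)) ^ v j)" .
      thus "F v = (\<Prod>j=1..k. (lam j * u) ^ v j / fact (v j) * exp (- lam j * u)) * exp (- s * real m)"
        by (simp add: F_def w_def prod.distrib[symmetric] power_mult_distrib) (intro prod.cong refl, simp add: mult_ac)
    qed
    thus ?thesis by (simp add: sum_distrib_right)
  qed
  moreover have "(\<Prod>j=1..k. exp (lam j * u * exp (- (real j * s))) * exp (- lam j * u))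
      = (\<Prod>j=1..k. exp (- lam j * u * (1 - exp (- (real j * s)))))"
    by (intro prod.cong refl) (simp add: exp_add[symmetric] algebra_simps)
  ultimately show ?thesis by simp
qed

definition phi :: "nat \<Rightarrow> (nat \<Rightarrow> nat) \<Rightarrow> (nat \<Rightarrow> nat \<Rightarrow> real) \<Rightarrow> (nat \<Rightarrow> real) \<Rightarrow> real" where
  "phi q k lam s = (\<Sum>i=1..q. \<Sum>j=1..k i. lam i j * (1 - exp (- (real j * s i))))"

lemma gen_fun:
  assumes lam: "\<And>i j. i \<in> {1..q} \<Longrightarrow> j \<in> {1..k i} \<Longrightarrow> lam i j \<ge> 0" and u: "u \<ge> 0"
  shows "((\<lambda>n. mgcp_pmf q k lam u n * exp (- (\<Sum>i=1..q. s i * real (n i))))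
           has_sum exp (- u * phi q k lam s)) (lattice q)"
proof -
  define h where "h i m = (\<Sum>v\<in>Omega (k i) m. \<Prod>j=1..k i. (lam i j * u) ^ v j / fact (v j) * exp (- lam i j * u))
             * exp (- s i * real m)" for i m
  have "((\<lambda>n. \<Prod>i=1..q. h i (n i)) has_sum (\<Prod>i=1..q. \<Prod>j=1..k i. exp (- lam i j * u * (1 - exp (- (real j * s i)))))) (latI {1..q})"
  proof (rule latI_prod_has_sum)
    fix i assume i: "i \<in> {1..q}"
    show "(h i has_sum (\<Prod>j=1..k i. exp (- lam i j * u * (1 - exp (- (real j * s i)))))) UNIV"
      unfolding h_def by (rule gen_fun_1) (use lam[OF i] u in auto)
  qed simp
  moreover have "(\<Prod>i=1..q. h i (n i)) = mgcp_pmf q k lam u n * exp (- (\<Sum>i=1..q. s i * real (n i)))" for n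
    by (simp add: h_def mgcp_pmf_def prod.distrib exp_sum flip: sum_negf)
  moreover have "(\<Prod>i=1..q. \<Prod>j=1..k i. exp (- lam i j * u * (1 - exp (- (real j * s i)))))
      = exp (- u * phi q k lam s)"
    by (simp add: phi_def exp_sum sum_distrib_left flip: sum_negf) (simp add: algebra_simps)
  ultimately show ?thesis by (simp add: lattice_latI)
qed

lemma gamma_scaled:
  fixes a b :: real
  assumes a: "a > 0" and b: "b > 0"
  shows "(\<integral>\<^sup>+x. ennreal (indicator {0<..} x * x powr (a-1) * exp (- (b*x))) \<partial>lborel)
         = ennreal (Gamma a / b powr a)"
proof -
  define f where "f x = ennreal (indicator {0<..} x * x powr (a-1) * exp (- (b*x)))" for x
  have fm: "f \<in> borel_measurable borel" unfolding f_def by measurable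
  have "integral\<^sup>N lborel f = ennreal \<bar>1/b\<bar> * (\<integral>\<^sup>+x. f (0 + (1/b) * x) \<partial>lborel)"
    by (rule nn_integral_real_affine[OF fm]) (use b in auto)
  also have "(\<lambda>x. f (0 + (1/b) * x)) = (\<lambda>x. ennreal (b powr (1-a)) * ennreal (indicator {0..} x * x powr (a - 1) / exp x))"
  proof
    fix x :: real
    show "f (0 + (1/b) * x) = ennreal (b powr (1-a)) * ennreal (indicator {0..} x * x powr (a - 1) / exp x)"
    proof (cases "x > 0")
      case True
      have "(x / b) powr (a - 1) = x powr (a-1) / b powr (a-1)"
        using True b by (simp add: powr_divide)
      also have "\<dots> = b powr (1-a) * x powr (a-1)"
      proof -
        have "b powr (1-a) = b powr (-(a-1))" by simp
        also have "\<dots> = 1 / b powr (a-1)" by (rule powr_minus_divide)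
        finally show ?thesis by simp
      qed
      finally have pw: "(x / b) powr (a - 1) = b powr (1-a) * x powr (a-1)" .
      have "f (0 + (1/b) * x) = ennreal (b powr (1-a) * (x powr (a - 1) / exp x))"
        unfolding f_def using True b pw by (simp add: exp_minus field_simps)
      thus ?thesis using True ennreal_mult'[of "b powr (1-a)" "x powr (a-1) / exp x"] by simp
    next
      case False
      hence "x \<le> 0" by simp
      moreover have "\<not> (0 < x / b)" using False b by (simp add: zero_less_divide_iff) 
      ultimately show ?thesis unfolding f_def using b
        by (cases "x = 0") (auto simp: indicator_def)
    qed
  qed
  also have "(\<integral>\<^sup>+x. ennreal (b powr (1-a)) * ennreal (indicator {0..} x * x powr (a - 1) / exp x) \<partial>lborel)
      = ennreal (b powr (1-a)) * ennreal (Gamma a)"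
    by (subst nn_integral_cmult) (auto simp: Gamma_conv_nn_integral_real[OF a])
  also have "ennreal \<bar>1/b\<bar> * (ennreal (b powr (1-a)) * ennreal (Gamma a)) = ennreal (1/b * b powr (1-a) * Gamma a)"
  proof -
    have g0: "Gamma a > 0" by (rule Gamma_real_pos[OF a])
    have e1: "ennreal (b powr (1-a)) * ennreal (Gamma a) = ennreal (b powr (1-a) * Gamma a)"
      using g0 by (intro ennreal_mult[symmetric]) auto
    have e2: "ennreal (1/b) * ennreal (b powr (1-a) * Gamma a) = ennreal (1/b * (b powr (1-a) * Gamma a))"
      using b g0 by (intro ennreal_mult[symmetric]) auto
    show ?thesis using e1 e2 b by (simp add: mult.assoc)
  qed
  finally have "integral\<^sup>N lborel f = ennreal (1/b * b powr (1-a) * Gamma a)" .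
  also have "1/b * b powr (1-a) * Gamma a = Gamma a / b powr a"
  proof -
    have "b powr (1-a) = b / b powr a" using b by (simp add: powr_diff)
    thus ?thesis using b by simp
  qed
  finally show ?thesis by (simp add: f_def)
qed

lemma powr_tail:
  fixes y \<alpha> :: real
  assumes y: "y > 0" and al: "\<alpha> > 0"
  shows "(\<integral>\<^sup>+x. ennreal (x powr (-\<alpha>-1)) * indicator {y..} x \<partial>lborel) = ennreal (y powr (-\<alpha>) / \<alpha>)"
proof -
  have "(\<integral>\<^sup>+x. ennreal (x powr (-\<alpha>-1)) * indicator {y..} x \<partial>lborel) = ennreal (0 - (- (y powr (-\<alpha>)) / \<alpha>))"
  proof (rule nn_integral_FTC_atLeast)
    show "(\<lambda>x. x powr (-\<alpha>-1)) \<in> borel_measurable borel" by measurable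
    fix x assume x: "y \<le> x"
    hence xp: "x > 0" using y by simp
    show "((\<lambda>x. - (x powr (-\<alpha>)) / \<alpha>) has_real_derivative x powr (-\<alpha>-1)) (at x)"
    proof -
      have "((\<lambda>x. x powr (-\<alpha>)) has_real_derivative (-\<alpha>) * x powr (-\<alpha> - 1)) (at x)"
        by (rule has_real_derivative_powr) (use xp in auto)
      hence "((\<lambda>x. - (x powr (-\<alpha>))) has_real_derivative - ((-\<alpha>) * x powr (-\<alpha> - 1))) (at x)"
        by (rule DERIV_minus)
      hence "((\<lambda>x. - (x powr (-\<alpha>)) / \<alpha>) has_real_derivative (- ((-\<alpha>) * x powr (-\<alpha> - 1))) / \<alpha>) (at x)"
        by (rule DERIV_cdivide)
      moreover have "(- ((-\<alpha>) * x powr (-\<alpha> - 1))) / \<alpha> = x powr (-\<alpha>-1)" using al by simp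
      ultimately show ?thesis by simp
    qed
    show "0 \<le> x powr (-\<alpha>-1)" by simp
  next
    show "((\<lambda>x. - (x powr (-\<alpha>)) / \<alpha>) \<longlongrightarrow> 0) at_top"
      using al by real_asymp
  qed
  thus ?thesis by simp
qed

lemma one_minus_exp_integral:
  fixes x c :: real
  assumes x: "x \<ge> 0" and c: "c \<ge> 0"
  shows "ennreal (1 - exp (- (c * x))) = (\<integral>\<^sup>+y. ennreal (c * exp (- (c * y))) * indicator {0..x} y \<partial>lborel)"
proof -
  have "((\<lambda>y. c * exp (- (c * y))) has_integral ((- exp (- (c * x))) - (- exp (- (c * 0))))) {0..x}"
    by (intro fundamental_theorem_of_calculus x)
       (auto intro!: derivative_eq_intros simp flip: has_real_derivative_iff_has_vector_derivative)
  hence hi: "((\<lambda>y. c * exp (- (c * y))) has_integral (1 - exp (- (c * x)))) {0..x}" by simp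
  have "(\<integral>\<^sup>+y. ennreal (indicator {0..x} y * (c * exp (- (c * y)))) \<partial>lborel) = ennreal (1 - exp (- (c * x)))"
  proof (rule nn_integral_has_integral_lborel)
    show "(\<lambda>y. indicator {0..x} y * (c * exp (- (c * y)))) \<in> borel_measurable borel" by measurable
    show "0 \<le> indicator {0..x} y * (c * exp (- (c * y)))" for y using c by simp
    show "((\<lambda>y. indicator {0..x} y * (c * exp (- (c * y)))) has_integral 1 - exp (- (c * x))) UNIV"
    proof -
      have "(\<lambda>y. indicator {0..x} y * (c * exp (- (c * y)))) = (\<lambda>y. if y \<in> {0..x} then c * exp (- (c * y)) else 0)"
        by (auto simp: indicator_def fun_eq_iff)
      thus ?thesis using hi has_integral_restrict_UNIV[of "{0..x}" "\<lambda>y. c * exp (- (c * y))"] by simp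
    qed
  qed
  thus ?thesis
    by (simp add: ennreal_mult' mult.commute ennreal_indicator)
qed

lemma levy_stable_integral:
  fixes \<alpha> c :: real
  assumes al: "0 < \<alpha>" "\<alpha> < 1" and c: "c \<ge> 0"
  shows "(\<integral>\<^sup>+x. ennreal (indicator {0<..} x * x powr (-\<alpha>-1) * (1 - exp (- (c * x)))) \<partial>lborel)
         = ennreal (c powr \<alpha> * Gamma (1-\<alpha>) / \<alpha>)"
proof (cases "c = 0")
  case True thus ?thesis by simp
next
  case False
  hence c: "c > 0" using c by simp
  define K where "K x y = ennreal (indicator {0<..} x * x powr (-\<alpha>-1)) *
      (ennreal (c * exp (- (c * y))) * (if 0 \<le> y \<and> y \<le> x then 1 else 0))" for x y :: real
  have Km: "case_prod K \<in> borel_measurable (lborel \<Otimes>\<^sub>M lborel)"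
    unfolding K_def by measurable
  have step1: "ennreal (indicator {0<..} x * x powr (-\<alpha>-1) * (1 - exp (- (c * x)))) = (\<integral>\<^sup>+y. K x y \<partial>lborel)" for x
  proof (cases "x > 0")
    case True
    have "ennreal (indicator {0<..} x * x powr (-\<alpha>-1) * (1 - exp (- (c * x))))
        = ennreal (indicator {0<..} x * x powr (-\<alpha>-1)) * ennreal (1 - exp (- (c * x)))"
      using True c by (intro ennreal_mult) auto
    also have "ennreal (1 - exp (- (c * x))) = (\<integral>\<^sup>+y. ennreal (c * exp (- (c * y))) * indicator {0..x} y \<partial>lborel)"
      by (rule one_minus_exp_integral) (use True c in auto)
    also have "ennreal (indicator {0<..} x * x powr (-\<alpha>-1)) * \<dots> = (\<integral>\<^sup>+y. K x y \<partial>lborel)"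
      unfolding K_def by (subst nn_integral_cmult[symmetric]) (auto simp: indicator_def of_bool_def)
    finally show ?thesis .
  next
    case False thus ?thesis by (simp add: K_def)
  qed
  have step2: "(\<integral>\<^sup>+x. K x y \<partial>lborel) = ennreal (indicator {0<..} y * (c / \<alpha>) * (y powr ((1-\<alpha>)-1) * exp (- (c * y))))"
    if y: "y \<noteq> 0" for y
  proof (cases "y > 0")
    case True
    have "(\<integral>\<^sup>+x. K x y \<partial>lborel) = (\<integral>\<^sup>+x. (ennreal (x powr (-\<alpha>-1)) * indicator {y..} x) * ennreal (c * exp (- (c * y))) \<partial>lborel)"
      by (rule nn_integral_cong) (use True in \<open>auto simp: K_def indicator_def\<close>)
    also have "\<dots> = ennreal (y powr (-\<alpha>) / \<alpha>) * ennreal (c * exp (- (c * y)))"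
      by (subst nn_integral_multc) (auto simp: powr_tail[OF True al(1)])
    also have "\<dots> = ennreal (c * exp (- (c * y)) * (y powr (-\<alpha>) / \<alpha>))"
      using c al by (subst ennreal_mult[symmetric]) (auto simp: mult.commute)
    also have "c * exp (- (c * y)) * (y powr (-\<alpha>) / \<alpha>) = indicator {0<..} y * (c / \<alpha>) * (y powr ((1-\<alpha>)-1) * exp (- (c * y)))"
      using True by simp
    finally show ?thesis .
  next
    case False
    hence "y < 0" using y by simp
    thus ?thesis by (simp add: K_def)
  qed
  have "(\<integral>\<^sup>+x. ennreal (indicator {0<..} x * x powr (-\<alpha>-1) * (1 - exp (- (c * x)))) \<partial>lborel)
      = (\<integral>\<^sup>+x. (\<integral>\<^sup>+y. K x y \<partial>lborel) \<partial>lborel)"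
    using step1 by simp
  also have "\<dots> = (\<integral>\<^sup>+y. (\<integral>\<^sup>+x. K x y \<partial>lborel) \<partial>lborel)"
    by (rule lborel_pair.Fubini'[OF Km, symmetric])
  also have "\<dots> = (\<integral>\<^sup>+y. ennreal (c / \<alpha>) * ennreal (indicator {0<..} y * y powr ((1-\<alpha>)-1) * exp (- (c * y))) \<partial>lborel)"
  proof (rule nn_integral_cong_AE)
    show "AE y in lborel. (\<integral>\<^sup>+x. K x y \<partial>lborel) = ennreal (c / \<alpha>) * ennreal (indicator {0<..} y * y powr ((1-\<alpha>)-1) * exp (- (c * y)))"
      using AE_lborel_singleton[of 0]
    proof eventually_elim
      case (elim y)
      have "ennreal (c / \<alpha>) * ennreal (indicator {0<..} y * y powr ((1-\<alpha>)-1) * exp (- (c * y)))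
          = ennreal (c / \<alpha> * (indicator {0<..} y * y powr ((1-\<alpha>)-1) * exp (- (c * y))))"
        using c al by (intro ennreal_mult[symmetric]) auto
      thus ?case using step2[OF elim] by (simp add: mult_ac)
    qed
  qed
  also have "\<dots> = ennreal (c / \<alpha>) * ennreal (Gamma (1-\<alpha>) / c powr (1-\<alpha>))"
    using gamma_scaled[of "1-\<alpha>" c] al c by (subst nn_integral_cmult) simp_all
  also have "\<dots> = ennreal (c / \<alpha> * (Gamma (1-\<alpha>) / c powr (1-\<alpha>)))"
    using c al Gamma_real_pos[of "1-\<alpha>"] by (intro ennreal_mult[symmetric]) auto
  also have "c / \<alpha> * (Gamma (1-\<alpha>) / c powr (1-\<alpha>)) = c powr \<alpha> * Gamma (1-\<alpha>) / \<alpha>"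
  proof -
    have "c powr (1-\<alpha>) = c / c powr \<alpha>" using c by (simp add: powr_diff)
    thus ?thesis using c al by simp
  qed
  finally show ?thesis .
qed

lemma hs_to_nn:
  fixes f :: "'a \<Rightarrow> real"
  assumes "(f has_sum r) A" "\<And>x. x \<in> A \<Longrightarrow> 0 \<le> f x"
  shows "(\<integral>\<^sup>+x. ennreal (f x) \<partial>count_space A) = ennreal r"
proof -
  have s: "Infinite_Set_Sum.abs_summable_on f A"
    using assms(1) real_summable_old_abs by (auto simp: summable_on_def)
  have "(\<integral>\<^sup>+x. ennreal (f x) \<partial>count_space A) = ennreal (infsetsum f A)"
    by (rule nn_integral_conv_infsetsum[OF s]) (use assms(2) in auto)
  also have "infsetsum f A = infsum f A" by (rule infsetsum_infsum[OF s])
  also have "infsum f A = r" by (rule infsumI[OF assms(1)])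
  finally show ?thesis .
qed

lemma nn_to_hs:
  fixes f :: "'a \<Rightarrow> real"
  assumes "(\<integral>\<^sup>+x. ennreal (f x) \<partial>count_space A) = ennreal r" "\<And>x. x \<in> A \<Longrightarrow> 0 \<le> f x" "r \<ge> 0"
  shows "(f has_sum r) A"
proof -
  have "integrable (count_space A) f"
    by (rule integrableI_nn_integral_finite[OF _ _ assms(1)]) (use assms(2) in \<open>auto simp: AE_count_space\<close>)
  hence s: "Infinite_Set_Sum.abs_summable_on f A" by (simp add: Infinite_Set_Sum.abs_summable_on_def)
  have "infsetsum f A = enn2real (\<integral>\<^sup>+x. ennreal (f x) \<partial>count_space A)"
    by (rule infsetsum_conv_nn_integral) (use assms in auto)
  also have "\<dots> = r" using assms by simp
  finally have "infsum f A = r" using infsetsum_infsum[OF s] by simp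
  moreover have "f summable_on A" using s real_summable_old_abs by blast
  ultimately show ?thesis using has_sum_infsum by blast
qed

definition Ntot :: "nat \<Rightarrow> (nat \<Rightarrow> nat) \<Rightarrow> (nat \<Rightarrow> nat \<Rightarrow> nat) \<Rightarrow> nat" where
  "Ntot q k f = (\<Sum>i=1..q. \<Sum>j=1..k i. f i j)"

definition Pf :: "nat \<Rightarrow> (nat \<Rightarrow> nat) \<Rightarrow> (nat \<Rightarrow> nat \<Rightarrow> real) \<Rightarrow> (nat \<Rightarrow> nat \<Rightarrow> nat) \<Rightarrow> real" where
  "Pf q k lam f = (\<Prod>i=1..q. \<Prod>j=1..k i. lam i j ^ f i j / fact (f i j))"

lemma mgcp_expand:
  "mgcp_pmf q k lam u n = (\<Sum>f\<in>Omega_fam q k n. u ^ Ntot q k f * exp (- (lam_total q k lam * u)) * Pf q k lam f)"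
proof -
  have inner: "(\<Prod>j=1..k i. (lam i j * u) ^ g j / fact (g j) * exp (- lam i j * u))
      = u ^ (\<Sum>j=1..k i. g j) * exp (- ((\<Sum>j=1..k i. lam i j) * u)) * (\<Prod>j=1..k i. lam i j ^ g j / fact (g j))" for i g
  proof -
    have "(\<Prod>j=1..k i. (lam i j * u) ^ g j / fact (g j) * exp (- lam i j * u))
        = (\<Prod>j=1..k i. u ^ g j * exp (- (lam i j * u)) * (lam i j ^ g j / fact (g j)))"
      by (intro prod.cong refl) (simp add: power_mult_distrib)
    also have "\<dots> = (\<Prod>j=1..k i. u ^ g j) * (\<Prod>j=1..k i. exp (- (lam i j * u))) * (\<Prod>j=1..k i. lam i j ^ g j / fact (g j))"
      by (simp only: prod.distrib[symmetric])
    also have "(\<Prod>j=1..k i. u ^ g j) = u ^ (\<Sum>j=1..k i. g j)" by (simp add: power_sum)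
    also have "(\<Prod>j=1..k i. exp (- (lam i j * u))) = exp (- ((\<Sum>j=1..k i. lam i j) * u))"
      by (simp add: exp_sum sum_distrib_right flip: sum_negf)
    finally show ?thesis .
  qed
  have "mgcp_pmf q k lam u n = (\<Sum>f\<in>Omega_fam q k n. \<Prod>i=1..q. \<Prod>j=1..k i. (lam i j * u) ^ f i j / fact (f i j) * exp (- lam i j * u))"
    unfolding mgcp_pmf_def Omega_fam_def by (rule prod_sum_PiE) (auto intro: Omega_finite)
  also have "\<dots> = (\<Sum>f\<in>Omega_fam q k n. u ^ Ntot q k f * exp (- (lam_total q k lam * u)) * Pf q k lam f)"
  proof (intro sum.cong refl)
    fix f
    have "(\<Prod>i=1..q. \<Prod>j=1..k i. (lam i j * u) ^ f i j / fact (f i j) * exp (- lam i j * u))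
        = (\<Prod>i=1..q. u ^ (\<Sum>j=1..k i. f i j) * exp (- ((\<Sum>j=1..k i. lam i j) * u)) * (\<Prod>j=1..k i. lam i j ^ f i j / fact (f i j)))"
      using inner[of _ "f _"] by simp
    also have "\<dots> = (\<Prod>i=1..q. u ^ (\<Sum>j=1..k i. f i j)) * (\<Prod>i=1..q. exp (- ((\<Sum>j=1..k i. lam i j) * u))) * Pf q k lam f"
      by (simp add: prod.distrib Pf_def)
    also have "(\<Prod>i=1..q. u ^ (\<Sum>j=1..k i. f i j)) = u ^ Ntot q k f" by (simp add: power_sum Ntot_def)
    also have "(\<Prod>i=1..q. exp (- ((\<Sum>j=1..k i. lam i j) * u))) = exp (- (lam_total q k lam * u))"
      by (simp add: exp_sum sum_distrib_right lam_total_def flip: sum_negf)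
    finally show "(\<Prod>i=1..q. \<Prod>j=1..k i. (lam i j * u) ^ f i j / fact (f i j) * exp (- lam i j * u))
        = u ^ Ntot q k f * exp (- (lam_total q k lam * u)) * Pf q k lam f" .
  qed
  finally show ?thesis .
qed

lemma Ntot_pos:
  assumes n: "n \<in> lattice q - {\<lambda>_. 0}" and f: "f \<in> Omega_fam q k n"
  shows "Ntot q k f \<ge> 1"
proof -
  obtain i where ni: "n i \<noteq> 0" using n by auto
  have i: "i \<in> {1..q}" using n ni by (auto simp: lattice_def)
  have fi: "f i \<in> Omega (k i) (n i)" using f i by (auto simp: Omega_fam_def)
  obtain j where j: "j \<in> {1..k i}" and fij: "f i j \<noteq> 0"
  proof (rule ccontr)
    assume "\<not> thesis"
    hence "\<forall>j\<in>{1..k i}. f i j = 0" using that by blast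
    hence "(\<Sum>j=1..k i. j * f i j) = 0" by simp
    thus False using fi ni by (simp add: Omega_def)
  qed
  have "f i j \<le> (\<Sum>j=1..k i. f i j)" by (rule member_le_sum) (use j in auto)
  also have "\<dots> \<le> Ntot q k f" unfolding Ntot_def by (rule member_le_sum[of i]) (use i in auto)
  finally show ?thesis using fij by simp
qed

definition pistar :: "nat \<Rightarrow> (nat \<Rightarrow> nat) \<Rightarrow> (nat \<Rightarrow> nat \<Rightarrow> real) \<Rightarrow> real \<Rightarrow> (nat \<Rightarrow> nat) \<Rightarrow> real" where
  "pistar q k lam \<alpha> n = \<alpha> * lam_total q k lam powr \<alpha> / Gamma (1 - \<alpha>) *
       (\<Sum>f\<in>Omega_fam q k n.
          Gamma (real (\<Sum>i=1..q. \<Sum>j=1..k i. f i j) - \<alpha>) *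
          (\<Prod>i=1..q. \<Prod>j=1..k i. (lam i j / lam_total q k lam) ^ f i j / fact (f i j)))"

lemma pistar_integral:
  assumes L: "lam_total q k lam > 0" and lam: "\<And>i j. i \<in> {1..q} \<Longrightarrow> j \<in> {1..k i} \<Longrightarrow> lam i j \<ge> 0"
    and al: "0 < \<alpha>" "\<alpha> < 1" and n: "n \<in> lattice q - {\<lambda>_. 0}"
  shows "(\<integral>\<^sup>+u. ennreal (indicator {0<..} u * u powr (-\<alpha>-1) * mgcp_pmf q k lam u n) \<partial>lborel)
       = ennreal (pistar q k lam \<alpha> n * Gamma (1 - \<alpha>) / \<alpha>)"
proof -
  define L where "L = lam_total q k lam"
  define g where "g f u = indicator {0<..} u * u powr ((real (Ntot q k f) - \<alpha>) - 1) * exp (- (L * u))" for f u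
  have Pf0: "Pf q k lam f \<ge> 0" for f
    unfolding Pf_def by (intro prod_nonneg) (auto intro!: divide_nonneg_nonneg zero_le_power lam)
  have pt: "indicator {0<..} u * u powr (-\<alpha>-1) * mgcp_pmf q k lam u n = (\<Sum>f\<in>Omega_fam q k n. Pf q k lam f * g f u)" for u
  proof (cases "u > 0")
    case True
    have pw: "u powr (-\<alpha>-1) * u ^ Ntot q k f = u powr ((real (Ntot q k f) - \<alpha>) - 1)" for f
      using True by (simp add: powr_realpow[symmetric] powr_add[symmetric] algebra_simps)
    have e: "u powr (-\<alpha>-1) * (u ^ Ntot q k f * exp (- (L * u)) * Pf q k lam f) = Pf q k lam f * g f u" for f
    proof -
      have "u powr (-\<alpha>-1) * (u ^ Ntot q k f * exp (- (L * u)) * Pf q k lam f)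
          = Pf q k lam f * ((u powr (-\<alpha>-1) * u ^ Ntot q k f) * exp (- (L * u)))" by (simp only: mult_ac)
      thus ?thesis unfolding pw g_def using True by simp
    qed
    have "indicator {0<..} u * u powr (-\<alpha>-1) * mgcp_pmf q k lam u n
        = (\<Sum>f\<in>Omega_fam q k n. u powr (-\<alpha>-1) * (u ^ Ntot q k f * exp (- (L * u)) * Pf q k lam f))"
      using True by (simp add: mgcp_expand L_def sum_distrib_left)
    also have "\<dots> = (\<Sum>f\<in>Omega_fam q k n. Pf q k lam f * g f u)"
      by (intro sum.cong refl e)
    finally show ?thesis .
  next
    case False thus ?thesis by (simp add: g_def)
  qed
  have "(\<integral>\<^sup>+u. ennreal (indicator {0<..} u * u powr (-\<alpha>-1) * mgcp_pmf q k lam u n) \<partial>lborel)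
      = (\<integral>\<^sup>+u. (\<Sum>f\<in>Omega_fam q k n. ennreal (Pf q k lam f) * ennreal (g f u)) \<partial>lborel)"
  proof (rule nn_integral_cong)
    fix u
    have g0: "g f u \<ge> 0" for f by (simp add: g_def)
    have "ennreal (\<Sum>f\<in>Omega_fam q k n. Pf q k lam f * g f u) = (\<Sum>f\<in>Omega_fam q k n. ennreal (Pf q k lam f * g f u))"
      by (rule sum_ennreal[symmetric]) (use Pf0 g0 in auto)
    also have "\<dots> = (\<Sum>f\<in>Omega_fam q k n. ennreal (Pf q k lam f) * ennreal (g f u))"
      by (intro sum.cong refl ennreal_mult) (use Pf0 g0 in auto)
    finally show "ennreal (indicator {0<..} u * u powr (-\<alpha>-1) * mgcp_pmf q k lam u n) = (\<Sum>f\<in>Omega_fam q k n. ennreal (Pf q k lam f) * ennreal (g f u))"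
      using pt by simp
  qed
  also have "\<dots> = (\<Sum>f\<in>Omega_fam q k n. ennreal (Pf q k lam f) * (\<integral>\<^sup>+u. ennreal (g f u) \<partial>lborel))"
    by (subst nn_integral_sum) (auto simp: g_def intro!: sum.cong nn_integral_cmult)
  also have "\<dots> = (\<Sum>f\<in>Omega_fam q k n. ennreal (Pf q k lam f * (Gamma (real (Ntot q k f) - \<alpha>) / L powr (real (Ntot q k f) - \<alpha>))))"
  proof (intro sum.cong refl)
    fix f assume f: "f \<in> Omega_fam q k n"
    have N: "real (Ntot q k f) - \<alpha> > 0" using Ntot_pos[OF n f] al by simp
    have I: "(\<integral>\<^sup>+u. ennreal (g f u) \<partial>lborel) = ennreal (Gamma (real (Ntot q k f) - \<alpha>) / L powr (real (Ntot q k f) - \<alpha>))"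
      unfolding g_def by (rule gamma_scaled[OF N]) (use L in \<open>simp add: L_def\<close>)
    have G0: "Gamma (real (Ntot q k f) - \<alpha>) / L powr (real (Ntot q k f) - \<alpha>) \<ge> 0"
      using Gamma_real_pos[OF N] by simp
    show "ennreal (Pf q k lam f) * (\<integral>\<^sup>+u. ennreal (g f u) \<partial>lborel) = ennreal (Pf q k lam f * (Gamma (real (Ntot q k f) - \<alpha>) / L powr (real (Ntot q k f) - \<alpha>)))"
      unfolding I by (rule ennreal_mult[OF Pf0 G0, symmetric])
  qed
  also have "\<dots> = ennreal (\<Sum>f\<in>Omega_fam q k n. Pf q k lam f * (Gamma (real (Ntot q k f) - \<alpha>) / L powr (real (Ntot q k f) - \<alpha>)))"
  proof (rule sum_ennreal)
    fix f assume f: "f \<in> Omega_fam q k n"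
    have N: "real (Ntot q k f) - \<alpha> > 0" using Ntot_pos[OF n f] al by simp
    show "0 \<le> Pf q k lam f * (Gamma (real (Ntot q k f) - \<alpha>) / L powr (real (Ntot q k f) - \<alpha>))"
      using Gamma_real_pos[OF N] Pf0 by simp
  qed
  also have "(\<Sum>f\<in>Omega_fam q k n. Pf q k lam f * (Gamma (real (Ntot q k f) - \<alpha>) / L powr (real (Ntot q k f) - \<alpha>)))
      = pistar q k lam \<alpha> n * Gamma (1 - \<alpha>) / \<alpha>"
  proof -
    have G1: "Gamma (1 - \<alpha>) > 0" using al by (intro Gamma_real_pos) simp
    have "pistar q k lam \<alpha> n * Gamma (1 - \<alpha>) / \<alpha> = L powr \<alpha> *
       (\<Sum>f\<in>Omega_fam q k n. Gamma (real (Ntot q k f) - \<alpha>) *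
          (\<Prod>i=1..q. \<Prod>j=1..k i. (lam i j / L) ^ f i j / fact (f i j)))"
      using G1 al by (simp add: pistar_def L_def Ntot_def less_imp_neq[OF G1, symmetric])
    also have "\<dots> = (\<Sum>f\<in>Omega_fam q k n. Pf q k lam f * (Gamma (real (Ntot q k f) - \<alpha>) / L powr (real (Ntot q k f) - \<alpha>)))"
      unfolding sum_distrib_left
    proof (intro sum.cong refl)
      fix f
      have "(\<Prod>i=1..q. \<Prod>j=1..k i. (lam i j / L) ^ f i j / fact (f i j))
          = (\<Prod>i=1..q. \<Prod>j=1..k i. (lam i j ^ f i j / fact (f i j)) / L ^ f i j)"
        by (intro prod.cong refl) (simp add: power_divide)
      also have "\<dots> = Pf q k lam f / L ^ Ntot q k f"
        by (simp only: prod_dividef Pf_def Ntot_def power_sum)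
      finally have e1: "(\<Prod>i=1..q. \<Prod>j=1..k i. (lam i j / L) ^ f i j / fact (f i j)) = Pf q k lam f / L ^ Ntot q k f" .
      have e2: "L powr (real (Ntot q k f) - \<alpha>) = L ^ Ntot q k f / L powr \<alpha>"
        using L by (simp add: powr_diff powr_realpow L_def)
      show "L powr \<alpha> * (Gamma (real (Ntot q k f) - \<alpha>) * (\<Prod>i=1..q. \<Prod>j=1..k i. (lam i j / L) ^ f i j / fact (f i j)))
          = Pf q k lam f * (Gamma (real (Ntot q k f) - \<alpha>) / L powr (real (Ntot q k f) - \<alpha>))"
        unfolding e1 e2 using L by (simp add: L_def field_simps)
    qed
    finally show ?thesis by simp
  qed
  finally show ?thesis .
qed

lemma mgcp_nonneg:
  assumes "u \<ge> 0" and lam: "\<And>i j. i \<in> {1..q} \<Longrightarrow> j \<in> {1..k i} \<Longrightarrow> lam i j \<ge> 0"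
  shows "mgcp_pmf q k lam u n \<ge> 0"
  unfolding mgcp_pmf_def using assms
  by (intro prod_nonneg sum_nonneg mult_nonneg_nonneg divide_nonneg_nonneg zero_le_power) auto

lemma mgcp_measurable [measurable]: "(\<lambda>u. mgcp_pmf q k lam u n) \<in> borel_measurable borel"
  unfolding mgcp_pmf_def by measurable

lemma pistar_nonneg:
  assumes L: "lam_total q k lam > 0" and lam: "\<And>i j. i \<in> {1..q} \<Longrightarrow> j \<in> {1..k i} \<Longrightarrow> lam i j \<ge> 0"
    and al: "0 < \<alpha>" "\<alpha> < 1" and n: "n \<in> lattice q - {\<lambda>_. 0}"
  shows "pistar q k lam \<alpha> n \<ge> 0"
proof -
  have G1: "Gamma (1 - \<alpha>) > 0" using al by (intro Gamma_real_pos) simp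
  have "(\<Sum>f\<in>Omega_fam q k n. Gamma (real (\<Sum>i=1..q. \<Sum>j=1..k i. f i j) - \<alpha>) *
          (\<Prod>i=1..q. \<Prod>j=1..k i. (lam i j / lam_total q k lam) ^ f i j / fact (f i j))) \<ge> 0"
  proof (intro sum_nonneg mult_nonneg_nonneg)
    fix f assume f: "f \<in> Omega_fam q k n"
    have N1: "(1::nat) \<le> (\<Sum>i=1..q. \<Sum>j=1..k i. f i j)" using Ntot_pos[OF n f] by (simp add: Ntot_def)
    have "(1::real) \<le> real (\<Sum>i=1..q. \<Sum>j=1..k i. f i j)" using N1 by (metis of_nat_1 of_nat_le_iff)
    hence "real (\<Sum>i=1..q. \<Sum>j=1..k i. f i j) - \<alpha> > 0" using al by linarith
    thus "0 \<le> Gamma (real (\<Sum>i=1..q. \<Sum>j=1..k i. f i j) - \<alpha>)" using Gamma_real_pos less_imp_le by blast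
    show "0 \<le> (\<Prod>i=1..q. \<Prod>j=1..k i. (lam i j / lam_total q k lam) ^ f i j / fact (f i j))"
      using L lam by (intro prod_nonneg divide_nonneg_nonneg zero_le_power) auto
  qed
  thus ?thesis unfolding pistar_def using G1 al L by simp
qed

lemma countable_lattice: "countable (lattice q)"
  by (simp add: lattice_latI countable_latI)

lemma pistar_levy:
  assumes L: "lam_total q k lam > 0" and lam: "\<And>i j. i \<in> {1..q} \<Longrightarrow> j \<in> {1..k i} \<Longrightarrow> lam i j \<ge> 0"
    and al: "0 < \<alpha>" "\<alpha> < 1" and s: "\<And>i. i \<in> {1..q} \<Longrightarrow> s i \<ge> 0"
  shows "((\<lambda>n. (1 - exp (- (\<Sum>i=1..q. s i * real (n i)))) * pistar q k lam \<alpha> n) has_sum (phi q k lam s) powr \<alpha>)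
           (lattice q - {\<lambda>_. 0})"
proof -
  define S where "S = lattice q - {\<lambda>_. 0}"
  define E where "E n = exp (- (\<Sum>i=1..q. s i * real (n i)))" for n :: "nat \<Rightarrow> nat"
  define c0 where "c0 = \<alpha> / Gamma (1 - \<alpha>)"
  define ph where "ph = phi q k lam s"
  have G1: "Gamma (1 - \<alpha>) > 0" using al by (intro Gamma_real_pos) simp
  have c0: "c0 > 0" using G1 al by (simp add: c0_def)
  have cS: "countable S" unfolding S_def using countable_lattice by auto
  have E1: "E n \<le> 1" for n
    unfolding E_def using s by (auto intro!: sum_nonneg mult_nonneg_nonneg)
  have ph0: "ph \<ge> 0" unfolding ph_def phi_def using lam s
    by (intro sum_nonneg mult_nonneg_nonneg) auto
  define F where "F n u = ennreal (c0 * (1 - E n) * (indicator {0<..} u * u powr (-\<alpha>-1) * mgcp_pmf q k lam u n))" for n u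
  have A: "ennreal ((1 - E n) * pistar q k lam \<alpha> n) = (\<integral>\<^sup>+u. F n u \<partial>lborel)" if n: "n \<in> S" for n
  proof -
    have "(\<integral>\<^sup>+u. F n u \<partial>lborel) = (\<integral>\<^sup>+u. ennreal (c0 * (1 - E n)) * ennreal (indicator {0<..} u * u powr (-\<alpha>-1) * mgcp_pmf q k lam u n) \<partial>lborel)"
      unfolding F_def using c0 E1[of n] by (intro nn_integral_cong ennreal_mult') auto
    also have "\<dots> = ennreal (c0 * (1 - E n)) * ennreal (pistar q k lam \<alpha> n * Gamma (1 - \<alpha>) / \<alpha>)"
      using pistar_integral[OF L lam al, of n] n by (subst nn_integral_cmult) (auto simp: S_def)
    also have "\<dots> = ennreal (c0 * (1 - E n) * (pistar q k lam \<alpha> n * Gamma (1 - \<alpha>) / \<alpha>))"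
      using c0 E1[of n] by (intro ennreal_mult'[symmetric]) auto
    also have "c0 * (1 - E n) * (pistar q k lam \<alpha> n * Gamma (1 - \<alpha>) / \<alpha>) = (1 - E n) * pistar q k lam \<alpha> n"
      using G1 al by (simp add: c0_def less_imp_neq[OF G1, symmetric])
    finally show ?thesis by simp
  qed
  have hsu: "((\<lambda>n. (1 - E n) * mgcp_pmf q k lam u n) has_sum (1 - exp (- (ph * u)))) S" if u: "u \<ge> 0" for u
  proof -
    have h1: "((\<lambda>n. mgcp_pmf q k lam u n * E n) has_sum exp (- u * ph)) (lattice q)"
      unfolding E_def ph_def by (rule gen_fun[OF lam u])
    have h0: "((\<lambda>n. mgcp_pmf q k lam u n * exp (- (\<Sum>i=1..q. 0 * real (n i)))) has_sum exp (- u * phi q k lam (\<lambda>_. 0))) (lattice q)"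
      by (rule gen_fun[OF lam u])
    have "phi q k lam (\<lambda>_. 0) = 0" by (simp add: phi_def)
    hence h0': "((\<lambda>n. mgcp_pmf q k lam u n) has_sum 1) (lattice q)" using h0 by simp
    have "((\<lambda>n. mgcp_pmf q k lam u n - mgcp_pmf q k lam u n * E n) has_sum (1 - exp (- u * ph))) (lattice q)"
      by (rule my_has_sum_diff[OF h0' h1])
    hence "((\<lambda>n. (1 - E n) * mgcp_pmf q k lam u n) has_sum (1 - exp (- (ph * u)))) (lattice q)"
      by (simp add: algebra_simps)
    moreover have "E (\<lambda>_. 0) = 1" by (simp add: E_def)
    ultimately show ?thesis unfolding S_def
      by (subst has_sum_cong_neutral[where T="lattice q" and g="\<lambda>n. (1 - E n) * mgcp_pmf q k lam u n"]) auto
  qed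
  have C: "(\<integral>\<^sup>+n. F n u \<partial>count_space S) = ennreal (c0 * (indicator {0<..} u * u powr (-\<alpha>-1) * (1 - exp (- (ph * u)))))" for u
  proof (cases "u > 0")
    case True
    have "(\<integral>\<^sup>+n. F n u \<partial>count_space S) = (\<integral>\<^sup>+n. ennreal (c0 * u powr (-\<alpha>-1)) * ennreal ((1 - E n) * mgcp_pmf q k lam u n) \<partial>count_space S)"
    proof (intro nn_integral_cong)
      fix n
      have e: "c0 * (1 - E n) * (indicator {0<..} u * u powr (-\<alpha>-1) * mgcp_pmf q k lam u n)
          = (c0 * u powr (-\<alpha>-1)) * ((1 - E n) * mgcp_pmf q k lam u n)" using True by simp
      show "F n u = ennreal (c0 * u powr (-\<alpha>-1)) * ennreal ((1 - E n) * mgcp_pmf q k lam u n)"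
        unfolding F_def e by (rule ennreal_mult') (use c0 in simp)
    qed
    also have "\<dots> = ennreal (c0 * u powr (-\<alpha>-1)) * ennreal (1 - exp (- (ph * u)))"
    proof -
      have "(\<integral>\<^sup>+n. ennreal ((1 - E n) * mgcp_pmf q k lam u n) \<partial>count_space S) = ennreal (1 - exp (- (ph * u)))"
      proof (rule hs_to_nn[OF hsu])
        fix n show "0 \<le> (1 - E n) * mgcp_pmf q k lam u n"
          using E1[of n] mgcp_nonneg[of u q k lam n] lam True by simp
      qed (use True in simp)
      thus ?thesis by (subst nn_integral_cmult) auto
    qed
    also have "\<dots> = ennreal (c0 * (indicator {0<..} u * u powr (-\<alpha>-1) * (1 - exp (- (ph * u)))))"
    proof -
      have e: "c0 * (indicator {0<..} u * u powr (-\<alpha>-1) * (1 - exp (- (ph * u)))) = (c0 * u powr (-\<alpha>-1)) * (1 - exp (- (ph * u)))"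
        using True by simp
      show ?thesis unfolding e by (rule ennreal_mult'[symmetric]) (use c0 in simp)
    qed
    finally show ?thesis .
  next
    case False thus ?thesis by (simp add: F_def)
  qed
  have "(\<integral>\<^sup>+n. ennreal ((1 - E n) * pistar q k lam \<alpha> n) \<partial>count_space S) = (\<integral>\<^sup>+n. (\<integral>\<^sup>+u. F n u \<partial>lborel) \<partial>count_space S)"
    by (rule nn_integral_cong) (simp add: A)
  also have "\<dots> = (\<integral>\<^sup>+u. (\<integral>\<^sup>+n. F n u \<partial>count_space S) \<partial>lborel)"
    by (rule nn_integral_count_space_nn_integral[symmetric, OF cS]) (unfold F_def, measurable)
  also have "\<dots> = (\<integral>\<^sup>+u. ennreal c0 * ennreal (indicator {0<..} u * u powr (-\<alpha>-1) * (1 - exp (- (ph * u)))) \<partial>lborel)"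
    unfolding C using c0 by (intro nn_integral_cong ennreal_mult') auto
  also have "\<dots> = ennreal c0 * ennreal (ph powr \<alpha> * Gamma (1-\<alpha>) / \<alpha>)"
    by (subst nn_integral_cmult) (auto simp: levy_stable_integral[OF al ph0])
  also have "\<dots> = ennreal (ph powr \<alpha>)"
    using c0 G1 al by (simp add: ennreal_mult'[symmetric] c0_def less_imp_neq[OF G1, symmetric])
  finally have "(\<integral>\<^sup>+n. ennreal ((1 - E n) * pistar q k lam \<alpha> n) \<partial>count_space S) = ennreal (ph powr \<alpha>)" .
  hence "((\<lambda>n. (1 - E n) * pistar q k lam \<alpha> n) has_sum ph powr \<alpha>) S"
    by (rule nn_to_hs) (use E1 pistar_nonneg[OF L lam al] in \<open>auto simp: S_def\<close>)
  thus ?thesis by (simp add: S_def E_def ph_def)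
qed

lemma pistar_summable:
  assumes L: "lam_total q k lam > 0" and lam: "\<And>i j. i \<in> {1..q} \<Longrightarrow> j \<in> {1..k i} \<Longrightarrow> lam i j \<ge> 0"
    and al: "0 < \<alpha>" "\<alpha> < 1"
  shows "pistar q k lam \<alpha> summable_on (lattice q - {\<lambda>_. 0})"
proof -
  define S where "S = lattice q - {\<lambda>_. 0}"
  define E where "E n = exp (- (\<Sum>i=1..q. ln 2 * real (n i)))" for n :: "nat \<Rightarrow> nat"
  have hs: "((\<lambda>n. (1 - E n) * pistar q k lam \<alpha> n) has_sum (phi q k lam (\<lambda>_. ln 2)) powr \<alpha>) S"
    unfolding S_def E_def by (rule pistar_levy[OF L lam al]) auto
  hence sm: "(\<lambda>n. 2 * ((1 - E n) * pistar q k lam \<alpha> n)) summable_on S"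
    by (intro summable_on_cmult_right) (auto simp: summable_on_def)
  have bound: "norm (pistar q k lam \<alpha> n) \<le> 2 * ((1 - E n) * pistar q k lam \<alpha> n)" if n: "n \<in> S" for n
  proof -
    obtain i where ni: "n i \<noteq> 0" using n by (auto simp: S_def)
    have i: "i \<in> {1..q}" using n ni by (auto simp: S_def lattice_def)
    have "ln 2 * real (n i) \<le> (\<Sum>i=1..q. ln 2 * real (n i))"
      by (rule member_le_sum) (use i in auto)
    moreover have "ln 2 \<le> ln 2 * real (n i)" using ni by simp
    ultimately have "ln 2 \<le> (\<Sum>i=1..q. ln 2 * real (n i))" by linarith
    hence "E n \<le> exp (- ln 2)" unfolding E_def by simp
    hence "E n \<le> 1/2" by (simp add: exp_minus)
    moreover have "pistar q k lam \<alpha> n \<ge> 0" using pistar_nonneg[OF L lam al] n by (simp add: S_def)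
    ultimately show ?thesis
    proof -
      assume E2: "E n \<le> 1/2" and p0: "pistar q k lam \<alpha> n \<ge> 0"
      have "(1/2) * pistar q k lam \<alpha> n \<le> (1 - E n) * pistar q k lam \<alpha> n"
        by (rule mult_right_mono) (use E2 p0 in auto)
      thus ?thesis using p0 by simp
    qed
  qed
  have "(\<lambda>n. norm (pistar q k lam \<alpha> n)) summable_on S"
    by (rule Infinite_Sum.abs_summable_on_comparison_test'[OF sm bound])
  thus ?thesis unfolding S_def[symmetric] using summable_on_iff_abs_summable_on_real by blast
qed

lemma mgcp_sum1:
  assumes lam: "\<And>i j. i \<in> {1..q} \<Longrightarrow> j \<in> {1..k i} \<Longrightarrow> lam i j \<ge> 0" and u: "u \<ge> 0"
  shows "((\<lambda>n. mgcp_pmf q k lam u n) has_sum 1) (lattice q)"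
proof -
  have h0: "((\<lambda>n. mgcp_pmf q k lam u n * exp (- (\<Sum>i=1..q. 0 * real (n i)))) has_sum exp (- u * phi q k lam (\<lambda>_. 0))) (lattice q)"
    by (rule gen_fun[OF lam u])
  have "phi q k lam (\<lambda>_. 0) = 0" by (simp add: phi_def)
  thus ?thesis using h0 by simp
qed

lemma mgcp_le1:
  assumes lam: "\<And>i j. i \<in> {1..q} \<Longrightarrow> j \<in> {1..k i} \<Longrightarrow> lam i j \<ge> 0" and u: "u \<ge> 0"
    and n: "n \<in> lattice q"
  shows "mgcp_pmf q k lam u n \<le> 1"
proof -
  have hs: "((\<lambda>n. mgcp_pmf q k lam u n) has_sum 1) (lattice q)" by (rule mgcp_sum1[OF lam u])
  have "infsum (\<lambda>n. mgcp_pmf q k lam u n) {n} \<le> infsum (\<lambda>n. mgcp_pmf q k lam u n) (lattice q)"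
  proof (rule infsum_mono_neutral)
    show "(\<lambda>n. mgcp_pmf q k lam u n) summable_on {n}" by (rule summable_on_finite) simp
    show "(\<lambda>n. mgcp_pmf q k lam u n) summable_on (lattice q)" using hs by (auto simp: summable_on_def)
    fix x show "0 \<le> mgcp_pmf q k lam u x" using mgcp_nonneg[of u q k lam x] u lam by simp
  qed (use n in auto)
  thus ?thesis using infsumI[OF hs] by simp
qed

lemma subord_laplace:
  assumes lam: "\<And>i j. i \<in> {1..q} \<Longrightarrow> j \<in> {1..k i} \<Longrightarrow> lam i j \<ge> 0"
    and st: "stable_subordinator_laws \<alpha> \<mu>"
    and s: "\<And>i. i \<in> {1..q} \<Longrightarrow> s i \<ge> 0"
  shows "((\<lambda>n. subordinated_pmf q k lam \<mu> 1 n * exp (- (\<Sum>i=1..q. s i * real (n i))))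
          has_sum exp (- (phi q k lam s powr \<alpha>))) (lattice q)"
proof -
  define M where "M = \<mu> 1"
  define E where "E n = exp (- (\<Sum>i=1..q. s i * real (n i)))" for n :: "nat \<Rightarrow> nat"
  define ph where "ph = phi q k lam s"
  have ps: "prob_space M" and sM: "sets M = sets borel" and AE0: "AE x in M. 0 \<le> x"
    and lap: "\<And>r. r \<ge> 0 \<Longrightarrow> (\<integral>x. exp (- r * x) \<partial>M) = exp (- 1 * r powr \<alpha>)"
    using st unfolding stable_subordinator_laws_def M_def by auto
  interpret prob_space M by (rule ps)
  have meas: "borel_measurable M = borel_measurable borel"
    by (rule measurable_cong_sets[OF sM refl])
  have ph0: "ph \<ge> 0" unfolding ph_def phi_def using lam s
    by (intro sum_nonneg mult_nonneg_nonneg) auto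
  have E0: "E n \<ge> 0" for n by (simp add: E_def)
  have mm: "(\<lambda>u. mgcp_pmf q k lam u n) \<in> borel_measurable M" for n
    unfolding meas by measurable
  have integ: "integrable M (\<lambda>u. mgcp_pmf q k lam u n)" if n: "n \<in> lattice q" for n
  proof (rule Bochner_Integration.integrable_bound[OF integrable_const[of 1] mm])
    show "AE x in M. norm (mgcp_pmf q k lam x n) \<le> norm (1::real)"
      using AE0 by eventually_elim (use mgcp_nonneg[OF _ lam] mgcp_le1[OF lam _ n] in auto)
  qed
  have spn: "ennreal (subordinated_pmf q k lam \<mu> 1 n) = (\<integral>\<^sup>+u. ennreal (mgcp_pmf q k lam u n) \<partial>M)"
    if n: "n \<in> lattice q" for n
    unfolding subordinated_pmf_def M_def[symmetric]
    by (rule nn_integral_eq_integral[symmetric, OF integ[OF n]])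
       (use AE0 in \<open>eventually_elim, use mgcp_nonneg[OF _ lam] in auto\<close>)
  have sp0: "subordinated_pmf q k lam \<mu> 1 n \<ge> 0" for n
    unfolding subordinated_pmf_def M_def[symmetric]
    by (rule integral_nonneg_AE) (use AE0 in \<open>eventually_elim, use mgcp_nonneg[OF _ lam] in auto\<close>)
  have "(\<integral>\<^sup>+n. ennreal (subordinated_pmf q k lam \<mu> 1 n * E n) \<partial>count_space (lattice q))
      = (\<integral>\<^sup>+n. (\<integral>\<^sup>+u. ennreal (mgcp_pmf q k lam u n * E n) \<partial>M) \<partial>count_space (lattice q))"
  proof (rule nn_integral_cong)
    fix n assume "n \<in> space (count_space (lattice q))"
    hence n: "n \<in> lattice q" by simp
    have "ennreal (subordinated_pmf q k lam \<mu> 1 n * E n) = ennreal (subordinated_pmf q k lam \<mu> 1 n) * ennreal (E n)"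
      by (rule ennreal_mult''[OF E0])
    also have "\<dots> = (\<integral>\<^sup>+u. ennreal (mgcp_pmf q k lam u n) * ennreal (E n) \<partial>M)"
      unfolding spn[OF n] by (rule nn_integral_multc[symmetric]) (use mm in measurable)
    also have "\<dots> = (\<integral>\<^sup>+u. ennreal (mgcp_pmf q k lam u n * E n) \<partial>M)"
      by (intro nn_integral_cong ennreal_mult''[symmetric] E0)
    finally show "ennreal (subordinated_pmf q k lam \<mu> 1 n * E n) = (\<integral>\<^sup>+u. ennreal (mgcp_pmf q k lam u n * E n) \<partial>M)" .
  qed
  also have "\<dots> = (\<integral>\<^sup>+u. (\<integral>\<^sup>+n. ennreal (mgcp_pmf q k lam u n * E n) \<partial>count_space (lattice q)) \<partial>M)"
    by (rule nn_integral_count_space_nn_integral[symmetric, OF countable_lattice])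
       (unfold E_def meas, measurable)
  also have "\<dots> = (\<integral>\<^sup>+u. ennreal (exp (- ph * u)) \<partial>M)"
  proof (rule nn_integral_cong_AE)
    show "AE u in M. (\<integral>\<^sup>+n. ennreal (mgcp_pmf q k lam u n * E n) \<partial>count_space (lattice q)) = ennreal (exp (- ph * u))"
      using AE0
    proof eventually_elim
      case (elim u)
      have "((\<lambda>n. mgcp_pmf q k lam u n * E n) has_sum exp (- u * ph)) (lattice q)"
        unfolding E_def ph_def by (rule gen_fun[OF lam elim])
      hence "(\<integral>\<^sup>+n. ennreal (mgcp_pmf q k lam u n * E n) \<partial>count_space (lattice q)) = ennreal (exp (- u * ph))"
        by (rule hs_to_nn) (use mgcp_nonneg[OF elim lam] E0 in auto)
      thus ?case by (simp add: mult.commute)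
    qed
  qed
  also have "\<dots> = ennreal (\<integral>u. exp (- ph * u) \<partial>M)"
  proof (rule nn_integral_eq_integral)
    have em: "(\<lambda>u. exp (- ph * u)) \<in> borel_measurable M" unfolding meas by measurable
    show "integrable M (\<lambda>u. exp (- ph * u))"
    proof (rule Bochner_Integration.integrable_bound[OF integrable_const[of 1] em])
      show "AE x in M. norm (exp (- ph * x)) \<le> norm (1::real)"
        using AE0 by eventually_elim (use ph0 in auto)
    qed
  qed auto
  also have "\<dots> = ennreal (exp (- (ph powr \<alpha>)))" using lap[OF ph0] by simp
  finally have "(\<integral>\<^sup>+n. ennreal (subordinated_pmf q k lam \<mu> 1 n * E n) \<partial>count_space (lattice q)) = ennreal (exp (- (ph powr \<alpha>)))" .
  hence "((\<lambda>n. subordinated_pmf q k lam \<mu> 1 n * E n) has_sum exp (- (ph powr \<alpha>))) (lattice q)"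
    by (rule nn_to_hs) (use sp0 E0 in auto)
  thus ?thesis by (simp add: E_def ph_def)
qed

definition PR :: "nat \<Rightarrow> nat" where "PR i = enumerate {p. prime p} i"

lemma PR_prime: "prime (PR i)"
  using enumerate_in_set[OF primes_infinite] by (simp add: PR_def)

lemma PR_inj: "inj PR"
  unfolding PR_def using primes_infinite by (intro strict_mono_imp_inj_on strict_monoI) (simp add: enumerate_mono)

definition mcode :: "nat \<Rightarrow> (nat \<Rightarrow> nat) \<Rightarrow> nat" where
  "mcode q n = (\<Prod>i=1..q. PR i ^ n i)"

lemma mcode_mult:
  assumes i: "i \<in> {1..q}"
  shows "multiplicity (PR i) (mcode q n) = n i"
proof -
  have inj: "inj_on PR {1..q}" using PR_inj by (rule inj_on_subset) simp
  define g where "g p = n (inv_into {1..q} PR p)" for p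
  have "mcode q n = (\<Prod>p\<in>PR ` {1..q}. p ^ g p)"
    unfolding mcode_def
  proof (subst prod.reindex[OF inj], rule prod.cong[OF refl])
    fix x assume x: "x \<in> {1..q}"
    show "PR x ^ n x = ((\<lambda>p. p ^ g p) \<circ> PR) x"
      by (simp only: g_def inv_into_f_f[OF inj x] o_def)
  qed
  moreover have "multiplicity (PR i) (\<Prod>p\<in>PR ` {1..q}. p ^ g p) = (if PR i \<in> PR ` {1..q} then g (PR i) else 0)"
    by (rule multiplicity_prod_prime_powers) (auto simp: PR_prime)
  ultimately have "multiplicity (PR i) (mcode q n) = (if PR i \<in> PR ` {1..q} then g (PR i) else 0)"
    by simp
  also have "\<dots> = n i" using i inv_into_f_f[OF inj i] by (simp add: g_def)
  finally show ?thesis .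
qed

lemma mcode_inj: "inj_on (mcode q) (lattice q)"
proof (rule inj_onI)
  fix n n' assume n: "n \<in> lattice q" and n': "n' \<in> lattice q" and e: "mcode q n = mcode q n'"
  show "n = n'"
  proof
    fix i show "n i = n' i"
    proof (cases "i \<in> {1..q}")
      case True thus ?thesis using mcode_mult[OF True, of n] mcode_mult[OF True, of n'] e by simp
    next
      case False thus ?thesis using n n' by (simp add: lattice_def)
    qed
  qed
qed

lemma mcode_ge2:
  assumes n: "n \<in> lattice q - {\<lambda>_. 0}"
  shows "mcode q n \<ge> 2"
proof -
  obtain i where ni: "n i \<noteq> 0" using n by auto
  have i: "i \<in> {1..q}" using n ni by (auto simp: lattice_def)
  have pos: "mcode q n > 0" unfolding mcode_def using PR_prime
    by (intro prod_pos) (auto intro: prime_gt_0_nat)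
  have "PR i ^ n i dvd mcode q n" unfolding mcode_def by (rule dvd_prodI) (use i in auto)
  hence "PR i ^ n i \<le> mcode q n" using pos by (rule dvd_imp_le)
  moreover have "PR i \<le> PR i ^ n i" using ni PR_prime[of i]
    by (metis One_nat_def Suc_leI not_gr_zero prime_gt_0_nat self_le_power)
  moreover have "2 \<le> PR i" using PR_prime[of i] by (rule prime_ge_2_nat)
  ultimately show ?thesis by linarith
qed

lemma E_mcode:
  "exp (- (\<Sum>i=1..q. real \<sigma> * ln (real (PR i)) * real (n i))) = (1 / real (mcode q n)) ^ \<sigma>"
proof -
  have P0: "real (PR i) > 0" for i using PR_prime[of i] by (simp add: prime_gt_0_nat)
  have m0: "real (mcode q n) > 0" unfolding mcode_def using P0 by (simp add: prod_pos)
  have "(\<Sum>i=1..q. real \<sigma> * ln (real (PR i)) * real (n i)) = real \<sigma> * ln (real (mcode q n))"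
  proof -
    have "ln (real (mcode q n)) = (\<Sum>i=1..q. ln (real (PR i) ^ n i))"
      unfolding mcode_def of_nat_prod of_nat_power by (rule ln_prod) (use P0 in auto)
    also have "\<dots> = (\<Sum>i=1..q. real (n i) * ln (real (PR i)))"
      by (intro sum.cong refl) (simp add: ln_realpow P0)
    finally show ?thesis by (simp add: sum_distrib_left mult_ac)
  qed
  hence "exp (- (\<Sum>i=1..q. real \<sigma> * ln (real (PR i)) * real (n i))) = exp (real \<sigma> * (- ln (real (mcode q n))))"
    by simp
  also have "\<dots> = exp (- ln (real (mcode q n))) ^ \<sigma>" by (rule exp_of_nat_mult)
  also have "exp (- ln (real (mcode q n))) = 1 / real (mcode q n)"
    using m0 by (simp add: exp_minus inverse_eq_divide)
  finally show ?thesis .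
qed

lemma prod_indicator_if:
  "finite I \<Longrightarrow> (\<Prod>i\<in>I. (if P i then 1 else 0) :: real) = (if \<forall>i\<in>I. P i then 1 else 0)"
  by (induction I rule: finite_induct) auto

theorem mainTheorem4:
  fixes q :: nat and k :: "nat \<Rightarrow> nat" and lam :: "nat \<Rightarrow> nat \<Rightarrow> real"
    and \<alpha> :: real and \<mu> :: "real \<Rightarrow> real measure" and \<pi> :: "(nat \<Rightarrow> nat) \<Rightarrow> real"
    and A :: "nat \<Rightarrow> nat set"
  assumes "q \<ge> 1"
    and "\<And>i. i \<in> {1..q} \<Longrightarrow> k i \<ge> 1"
    and "\<And>i j. i \<in> {1..q} \<Longrightarrow> j \<in> {1..k i} \<Longrightarrow> lam i j > 0"
    and "0 < \<alpha>" and "\<alpha> < 1"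
    and "stable_subordinator_laws \<alpha> \<mu>"
    and "is_levy_measure q (subordinated_pmf q k lam \<mu>) \<pi>"
  shows "levy_measure_of q \<pi> {n. \<forall>i\<in>{1..q}. n i \<in> A i} =
    \<alpha> * lam_total q k lam powr \<alpha> / Gamma (1 - \<alpha>) *
    (\<Sum>\<^sub>\<infinity>n\<in>lattice q - {\<lambda>_. 0}.
       (\<Sum>f\<in>Omega_fam q k n.
          Gamma (real (\<Sum>i=1..q. \<Sum>j=1..k i. f i j) - \<alpha>) *
          (\<Prod>i=1..q. (\<Prod>j=1..k i.
             (lam i j / lam_total q k lam) ^ f i j / fact (f i j)) *
             (if n i \<in> A i then 1 else 0))))"
proof -
  note q1 = assms(1) and k1 = assms(2) and lampos = assms(3) and al = assms(4,5)
    and st = assms(6) and lev = assms(7)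
  have lam: "\<And>i j. i \<in> {1..q} \<Longrightarrow> j \<in> {1..k i} \<Longrightarrow> lam i j \<ge> 0"
    using lampos less_imp_le by blast
  have L: "lam_total q k lam > 0"
    unfolding lam_total_def using q1 k1 lampos by (intro sum_pos) auto
  define S where "S = lattice q - {\<lambda>_. 0}"
  define E where "E s n = exp (- (\<Sum>i=1..q. s i * real (n i)))" for s :: "nat \<Rightarrow> real" and n :: "nat \<Rightarrow> nat"
  have pi0: "\<And>n. n \<in> S \<Longrightarrow> 0 \<le> \<pi> n" and pis: "\<pi> summable_on S"
    and lap: "\<And>t s. t \<ge> 0 \<Longrightarrow> (\<forall>i\<in>{1..q}. 0 \<le> s i) \<Longrightarrow>
        (\<Sum>\<^sub>\<infinity>n\<in>lattice q. subordinated_pmf q k lam \<mu> t n * E s n) =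
        exp (- t * (\<Sum>\<^sub>\<infinity>n\<in>S. (1 - E s n) * \<pi> n))"
    using lev unfolding is_levy_measure_def S_def E_def by auto
  have E01: "0 \<le> E s n \<and> E s n \<le> 1" if "\<forall>i\<in>{1..q}. 0 \<le> s i" for s n
    unfolding E_def using that by (auto intro!: sum_nonneg mult_nonneg_nonneg)
  have psi: "(\<Sum>\<^sub>\<infinity>n\<in>S. (1 - E s n) * \<pi> n) = phi q k lam s powr \<alpha>" if s: "\<forall>i\<in>{1..q}. 0 \<le> s i" for s
  proof -
    have "exp (- (phi q k lam s powr \<alpha>)) = (\<Sum>\<^sub>\<infinity>n\<in>lattice q. subordinated_pmf q k lam \<mu> 1 n * E s n)"
      by (rule infsumI[symmetric]) (unfold E_def, rule subord_laplace[OF lam st], use s in auto)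
    also have "\<dots> = exp (- 1 * (\<Sum>\<^sub>\<infinity>n\<in>S. (1 - E s n) * \<pi> n))" by (rule lap) (use s in auto)
    finally show ?thesis by simp
  qed
  have pss: "(\<Sum>\<^sub>\<infinity>n\<in>S. (1 - E s n) * pistar q k lam \<alpha> n) = phi q k lam s powr \<alpha>" if s: "\<forall>i\<in>{1..q}. 0 \<le> s i" for s
    unfolding S_def E_def by (rule infsumI, rule pistar_levy[OF L lam al]) (use s in auto)
  have pst: "pistar q k lam \<alpha> summable_on S" unfolding S_def by (rule pistar_summable[OF L lam al])
  have dsum: "(\<lambda>n. \<pi> n - pistar q k lam \<alpha> n) summable_on S"
    using my_has_sum_diff[OF has_sum_infsum[OF pis] has_sum_infsum[OF pst]] by (auto simp: summable_on_def)
  have eqpi: "\<pi> n = pistar q k lam \<alpha> n" if n: "n \<in> S" for n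
  proof -
    have "\<pi> n - pistar q k lam \<alpha> n = 0"
    proof (rule dirichlet_unique[OF dsum, where m="mcode q"])
      show "inj_on (mcode q) S" unfolding S_def by (rule inj_on_subset[OF mcode_inj]) auto
      show "\<And>n. n \<in> S \<Longrightarrow> 2 \<le> mcode q n" unfolding S_def by (rule mcode_ge2)
      show "n \<in> S" by (rule n)
      fix \<sigma> :: nat
      define s where "s i = real \<sigma> * ln (real (PR i))" for i
      have s0: "\<forall>i\<in>{1..q}. 0 \<le> s i"
        using PR_prime by (auto simp: s_def prime_gt_0_nat intro!: mult_nonneg_nonneg ln_ge_zero)
           (metis One_nat_def Suc_leI of_nat_1 of_nat_le_iff prime_gt_0_nat)
      have Es: "E s n = (1 / real (mcode q n)) ^ \<sigma>" for n
        unfolding E_def s_def by (rule E_mcode)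
      have bnd: "\<bar>1 - E s n\<bar> \<le> 1" for n using E01[OF s0, of n] by simp
      have "(\<Sum>\<^sub>\<infinity>n\<in>S. (1 - (1 / real (mcode q n)) ^ \<sigma>) * (\<pi> n - pistar q k lam \<alpha> n))
          = (\<Sum>\<^sub>\<infinity>n\<in>S. (1 - E s n) * \<pi> n - (1 - E s n) * pistar q k lam \<alpha> n)"
        by (intro infsum_cong) (simp add: Es algebra_simps)
      also have "\<dots> = (\<Sum>\<^sub>\<infinity>n\<in>S. (1 - E s n) * \<pi> n) - (\<Sum>\<^sub>\<infinity>n\<in>S. (1 - E s n) * pistar q k lam \<alpha> n)"
        by (rule my_infsum_diff; rule summable_bounded_mult) (use pis pst bnd in auto)
      also have "\<dots> = 0" using psi[OF s0] pss[OF s0] by simp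
      finally show "(\<Sum>\<^sub>\<infinity>n\<in>S. (1 - (1 / real (mcode q n)) ^ \<sigma>) * (\<pi> n - pistar q k lam \<alpha> n)) = 0" .
    qed
    thus ?thesis by simp
  qed
  define B where "B = {n. \<forall>i\<in>{1..q}. n i \<in> A i}"
  define c where "c = \<alpha> * lam_total q k lam powr \<alpha> / Gamma (1 - \<alpha>)"
  define T where "T n = (\<Sum>f\<in>Omega_fam q k n. Gamma (real (\<Sum>i=1..q. \<Sum>j=1..k i. f i j) - \<alpha>) *
          (\<Prod>i=1..q. \<Prod>j=1..k i. (lam i j / lam_total q k lam) ^ f i j / fact (f i j)))" for n
  have pT: "pistar q k lam \<alpha> n = c * T n" for n by (simp add: pistar_def c_def T_def)
  have inner: "(\<Sum>f\<in>Omega_fam q k n.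
          Gamma (real (\<Sum>i=1..q. \<Sum>j=1..k i. f i j) - \<alpha>) *
          (\<Prod>i=1..q. (\<Prod>j=1..k i.
             (lam i j / lam_total q k lam) ^ f i j / fact (f i j)) *
             (if n i \<in> A i then 1 else 0))) = (if n \<in> B then 1 else 0) * T n" for n
  proof -
    have "(\<Prod>i=1..q. (\<Prod>j=1..k i. (lam i j / lam_total q k lam) ^ f i j / fact (f i j)) * (if n i \<in> A i then 1 else 0))
        = (\<Prod>i=1..q. \<Prod>j=1..k i. (lam i j / lam_total q k lam) ^ f i j / fact (f i j)) * (if n \<in> B then 1 else 0)" for f
      by (simp add: prod.distrib prod_indicator_if B_def)
    thus ?thesis by (simp add: T_def sum_distrib_left sum_distrib_right mult_ac)
  qed
  have "levy_measure_of q \<pi> B = (\<Sum>\<^sub>\<infinity>n\<in>B \<inter> S. \<pi> n)" by (simp add: levy_measure_of_def S_def)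
  also have "\<dots> = (\<Sum>\<^sub>\<infinity>n\<in>B \<inter> S. pistar q k lam \<alpha> n)" by (intro infsum_cong) (simp add: eqpi)
  also have "\<dots> = (\<Sum>\<^sub>\<infinity>n\<in>S. (if n \<in> B then 1 else 0) * pistar q k lam \<alpha> n)"
    by (rule infsum_cong_neutral) auto
  also have "\<dots> = c * (\<Sum>\<^sub>\<infinity>n\<in>S. (if n \<in> B then 1 else 0) * T n)"
    by (subst infsum_cmult_right'[symmetric]) (simp add: pT mult_ac)
  finally have X: "levy_measure_of q \<pi> B = c * (\<Sum>\<^sub>\<infinity>n\<in>S. (if n \<in> B then 1 else 0) * T n)" .
  show ?thesis unfolding inner using X by (simp only: B_def c_def S_def)
qed

end
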